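(* Let $a_0,a_1,a_2,a_3,a_4>0$ and $b_0,b_1,b_2,b_3>0$ be real numbers with $$a_1(a_2a_3-a_1a_4)=a_0a_3^2,$$ and consider the real-rational function $$Z(s)=\frac{s\,(b_3s^3+b_2s^2+b_1s+b_0)}{a_4s^4+a_3s^3+a_2s^2+a_1s+a_0}.$$ Under these hypotheses the denominator has exactly one pair of purely imaginary roots $s=\pm jp$ (with $p>0$, $p^2=a_1/a_3$), and these roots are simple. Then the residues of $Z$ at $s=\pm jp$ are real and positive if and only if both of the following hold: (a) $(a_3b_1-a_1b_3)(a_2a_3-2a_1a_4)=(a_3b_0-a_1b_2)\,a_3^2$; (b) $a_1b_3-a_3b_1<0$.
   Context: $j$ denotes the imaginary unit. The residue of $Z$ at a point $s_0$ is the coefficient of $(s-s_0)^{-1}$ in the Laurent expansion of $Z$ about $s_0$. *)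

theory Defs
  imports "HOL-Complex_Analysis.Complex_Analysis"
begin

end

theory Submission
  imports Defs
begin

lemma res_lemma:
  fixes D N H :: "complex \<Rightarrow> complex" and z :: complex
  assumes fac: "\<And>s. D s = (s - z) * H s"
    and Hh: "H holomorphic_on UNIV" and Nh: "N holomorphic_on UNIV"
    and Hz: "H z \<noteq> 0"
  shows "residue (\<lambda>s. N s / D s) z = N z / H z" "deriv D z = H z"
proof -
  have op: "open {s. H s \<noteq> 0}"
    proof -
    have "continuous_on UNIV H" using Hh holomorphic_on_imp_continuous_on by blast
    from open_vimage[OF _ this, of "-{0}"] show ?thesis by (simp add: vimage_def open_Compl)
  qed
  have eq: "(\<lambda>s. N s / D s) = (\<lambda>s. N s / H s / (s - z))"
    by (auto simp: fac)
  have "(\<lambda>s. N s / H s) holomorphic_on {s. H s \<noteq> 0}"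
    by (intro holomorphic_intros holomorphic_on_subset[OF Nh] holomorphic_on_subset[OF Hh]) auto
  from residue_simple[OF op _ this] Hz show "residue (\<lambda>s. N s / D s) z = N z / H z"
    unfolding eq by simp
  have "((\<lambda>s. (s - z) * H s) has_field_derivative (1 * H z + (z - z) * deriv H z)) (at z)"
    using Hh by (auto intro!: derivative_eq_intros holomorphic_derivI[of H UNIV])
  hence "(D has_field_derivative H z) (at z)" proof -
    have "D = (\<lambda>s. (s - z) * H s)" using fac by auto
    with \<open>((\<lambda>s. (s - z) * H s) has_field_derivative _) _\<close> show ?thesis by simp
  qed
  thus "deriv D z = H z" by (rule DERIV_imp_deriv)
qed

lemma cdiv:
  fixes \<alpha> \<beta> \<gamma> \<delta> :: real
  assumes "\<gamma>^2 + \<delta>^2 \<noteq> 0"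
  shows "(of_real \<alpha> + \<i> * of_real \<beta>) / (of_real \<gamma> + \<i> * of_real \<delta>)
     = Complex ((\<alpha>*\<gamma>+\<beta>*\<delta>)/(\<gamma>^2+\<delta>^2)) ((\<beta>*\<gamma>-\<alpha>*\<delta>)/(\<gamma>^2+\<delta>^2))"
  using assms by (simp add: complex_eq_iff Re_divide Im_divide power2_eq_square)

lemma real_key:
  fixes A B C E q :: real
  assumes "q > 0" "E > 0"
  shows "(B*C = A*E \<and> A*C + q*B*E > 0) \<longleftrightarrow> (B*C = A*E \<and> B > 0)"
proof (cases "B*C = A*E")
  case True
  hence "A = B*C/E" using assms by (simp add: field_simps)
  define X where "X = (C^2 + q*E^2)/E"
  have "A*C + q*B*E = B * X" using assms \<open>A = _\<close> unfolding X_def by (simp add: field_simps power2_eq_square)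
  moreover have "X > 0" using assms unfolding X_def by (intro divide_pos_pos add_nonneg_pos) auto
  ultimately show ?thesis using True by (simp add: zero_less_mult_iff)
qed simp

theorem lemma4:
  fixes a0 a1 a2 a3 a4 b0 b1 b2 b3 :: real
    and D N Z :: "complex \<Rightarrow> complex"
    and p :: real
  assumes pos_a: "a0 > 0" "a1 > 0" "a2 > 0" "a3 > 0" "a4 > 0"
    and pos_b: "b0 > 0" "b1 > 0" "b2 > 0" "b3 > 0"
    and rel: "a1 * (a2 * a3 - a1 * a4) = a0 * a3^2"
    and D_def: "D = (\<lambda>s. of_real a4 * s^4 + of_real a3 * s^3 + of_real a2 * s^2 + of_real a1 * s + of_real a0)"
    and N_def: "N = (\<lambda>s. s * (of_real b3 * s^3 + of_real b2 * s^2 + of_real b1 * s + of_real b0))"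
    and Z_def: "Z = (\<lambda>s. N s / D s)"
    and p_def: "p = sqrt (a1 / a3)"
  shows "p > 0 \<and> p^2 = a1 / a3
    \<and> {s. Re s = 0 \<and> D s = 0} = {\<i> * of_real p, - \<i> * of_real p}
    \<and> deriv D (\<i> * of_real p) \<noteq> 0 \<and> deriv D (- \<i> * of_real p) \<noteq> 0
    \<and> ((residue Z (\<i> * of_real p) \<in> \<real> \<and> Re (residue Z (\<i> * of_real p)) > 0
         \<and> residue Z (- \<i> * of_real p) \<in> \<real> \<and> Re (residue Z (- \<i> * of_real p)) > 0)
       \<longleftrightarrow> ((a3 * b1 - a1 * b3) * (a2 * a3 - 2 * a1 * a4) = (a3 * b0 - a1 * b2) * a3^2
            \<and> a1 * b3 - a3 * b1 < 0))"
proof -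
  define q where "q = a1 / a3"
  define c where "c = a2 - a4 * q"
  have q0: "q > 0" using pos_a by (simp add: q_def)
  have p0: "p > 0" using q0 by (simp add: p_def q_def[symmetric])
  have pq: "p^2 = q" using q0 by (simp add: p_def q_def[symmetric])
  have e1: "a1 = a3 * q" using pos_a by (simp add: q_def)
  have e0: "a0 = c * q" using rel pos_a unfolding c_def q_def by (simp add: field_simps power2_eq_square)
  have e2: "a2 = c + a4 * q" by (simp add: c_def)
  have c0: "c > 0" using e0 q0 pos_a by (metis zero_less_mult_pos2)
  define w where "w = \<i> * complex_of_real p"
  have w2: "w^2 = - of_real q" unfolding w_def using pq
    by (simp add: power_mult_distrib flip: of_real_power)
  define Q where "Q = (\<lambda>s. of_real a4 * s^2 + of_real a3 * s + complex_of_real c)"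
  have fac: "D s = (s^2 + of_real q) * Q s" for s
    unfolding D_def Q_def e0 e1 e2 by (simp add: algebra_simps power2_eq_square power3_eq_cube power4_eq_xxxx)
  have sq: "(s - w) * (s + w) = s^2 + of_real q" for s
  proof -
    have "(s - w) * (s + w) = s^2 - w^2" by (simp add: algebra_simps power2_eq_square)
    thus ?thesis using w2 by simp
  qed
  have fac1: "D s = (s - w) * ((s + w) * Q s)" for s
    using fac[of s] sq[of s] by (simp add: mult.assoc)
  have fac2: "D s = (s - (-w)) * ((s - w) * Q s)" for s
    using fac[of s] sq[of s] by (simp add: mult.assoc mult.commute)
  define C where "C = c - a4 * q"
  define E where "E = a3"
  define A where "A = b0 - b2 * q"
  define B where "B = b1 - b3 * q"
  have Qw: "Q w = of_real C + \<i> * of_real (p * E)"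
    unfolding Q_def C_def E_def using w2 by (simp add: w_def algebra_simps power2_eq_square)
  have Qmw: "Q (-w) = of_real C - \<i> * of_real (p * E)"
    unfolding Q_def C_def E_def using w2 by (simp add: w_def algebra_simps power2_eq_square)
  have w0: "w \<noteq> 0" using p0 by (simp add: w_def)
  have Qw0: "Q w \<noteq> 0" using p0 pos_a unfolding Qw E_def by (simp add: complex_eq_iff)
  have Qmw0: "Q (-w) \<noteq> 0" using p0 pos_a unfolding Qmw E_def by (simp add: complex_eq_iff)
  have Qh: "Q holomorphic_on UNIV" unfolding Q_def by (intro holomorphic_intros)
  have Nh: "N holomorphic_on UNIV" unfolding N_def by (intro holomorphic_intros)
  have H1h: "(\<lambda>s. (s + w) * Q s) holomorphic_on UNIV" using Qh by (intro holomorphic_intros)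
  have H2h: "(\<lambda>s. (s - w) * Q s) holomorphic_on UNIV" using Qh by (intro holomorphic_intros)
  have H1w: "(w + w) * Q w \<noteq> 0" using w0 Qw0 by simp
  have H2w: "(-w - w) * Q (-w) \<noteq> 0" using w0 Qmw0 by simp
  note r1 = res_lemma[where D=D and z=w, OF fac1 H1h Nh H1w]
  note r2 = res_lemma[where D=D and z="-w", OF fac2 H2h Nh H2w]
  have Nw: "N w = w * (of_real A + \<i> * of_real (p * B))"
    unfolding N_def A_def B_def using w2
    by (simp add: w_def algebra_simps power2_eq_square power3_eq_cube)
  have Nmw: "N (-w) = (-w) * (of_real A - \<i> * of_real (p * B))"
    unfolding N_def A_def B_def using w2
    by (simp add: w_def algebra_simps power2_eq_square power3_eq_cube)
  have "(2*p*E)^2 > 0" using p0 pos_a by (simp add: E_def)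
  hence denp: "(2*C)^2 + (2*p*E)^2 > 0" by (intro add_nonneg_pos) auto
  hence den: "(2*C)^2 + (2*p*E)^2 \<noteq> 0" by simp
  have den': "(2*C)^2 + (-(2*p*E))^2 \<noteq> 0" using den by simp
  have R1: "residue Z w = (of_real A + \<i> * of_real (p * B)) / (of_real (2*C) + \<i> * of_real (2*p*E))"
  proof -
    have "(w + w) * Q w = w * (of_real (2*C) + \<i> * of_real (2*p*E))" unfolding Qw by (simp add: algebra_simps)
    thus ?thesis unfolding Z_def r1(1) Nw using w0 by simp
  qed
  have R2: "residue Z (-w) = (of_real A + \<i> * of_real (-(p * B))) / (of_real (2*C) + \<i> * of_real (-(2*p*E)))"
  proof -
    have "(-w - w) * Q (-w) = (-w) * (of_real (2*C) + \<i> * of_real (-(2*p*E)))" unfolding Qmw by (simp add: algebra_simps)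
    moreover have "of_real A - \<i> * of_real (p * B) = of_real A + \<i> * of_real (-(p * B))" by simp
    ultimately show ?thesis unfolding Z_def r2(1) Nmw using w0 by (simp del: of_real_minus)
  qed
  define dd where "dd = (2*C)^2 + (2*p*E)^2"
  have dd0: "dd > 0" using denp by (simp add: dd_def)
  have R1': "residue Z w = Complex ((A*(2*C) + (p*B)*(2*p*E))/dd) (((p*B)*(2*C) - A*(2*p*E))/dd)"
    unfolding R1 cdiv[OF den] dd_def ..
  have R2': "residue Z (-w) = Complex ((A*(2*C) + (-(p*B))*(-(2*p*E)))/dd) (((-(p*B))*(2*C) - A*(-(2*p*E)))/dd)"
    unfolding R2 cdiv[OF den'] dd_def by simp
  have I1: "((p*B)*(2*C) - A*(2*p*E))/dd = 0 \<longleftrightarrow> B*C = A*E"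
  proof -
    have "((p*B)*(2*C) - A*(2*p*E)) = (2*p) * (B*C - A*E)" by (simp add: algebra_simps)
    thus ?thesis using dd0 p0 by simp
  qed
  have I2: "((-(p*B))*(2*C) - A*(-(2*p*E)))/dd = 0 \<longleftrightarrow> B*C = A*E"
  proof -
    have "((-(p*B))*(2*C) - A*(-(2*p*E))) = -(2*p) * (B*C - A*E)" by (simp add: algebra_simps)
    thus ?thesis using dd0 p0 by simp
  qed
  have Re1: "(A*(2*C) + (p*B)*(2*p*E))/dd > 0 \<longleftrightarrow> A*C + q*B*E > 0"
  proof -
    have "A*(2*C) + (p*B)*(2*p*E) = 2 * (A*C + p^2*B*E)" by (simp add: algebra_simps power2_eq_square)
    hence "A*(2*C) + (p*B)*(2*p*E) = 2 * (A*C + q*B*E)" by (simp only: pq)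
    thus ?thesis using dd0 by (simp only: zero_less_divide_iff) auto
  qed
  have Re2: "(A*(2*C) + (-(p*B))*(-(2*p*E)))/dd > 0 \<longleftrightarrow> A*C + q*B*E > 0"
    using Re1 by simp
  have E0: "E > 0" using pos_a by (simp add: E_def)
  have cond: "((a3 * b1 - a1 * b3) * (a2 * a3 - 2 * a1 * a4) = (a3 * b0 - a1 * b2) * a3^2
            \<and> a1 * b3 - a3 * b1 < 0) \<longleftrightarrow> (B*C = A*E \<and> B > 0)"
  proof -
    have x1: "a3 * b1 - a1 * b3 = a3 * B" unfolding B_def e1 by (simp add: algebra_simps)
    have x2: "a2 * a3 - 2 * a1 * a4 = a3 * C" unfolding C_def c_def e1 by (simp add: algebra_simps)
    have x3: "a3 * b0 - a1 * b2 = a3 * A" unfolding A_def e1 by (simp add: algebra_simps)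
    have x4: "a1 * b3 - a3 * b1 = - (a3 * B)" using x1 by simp
    have "(a3 * B) * (a3 * C) = (a3 * A) * a3^2 \<longleftrightarrow> B*C = A*E"
    proof -
      have "(a3 * B) * (a3 * C) = (a3 * A) * a3^2 \<longleftrightarrow> a3^2 * (B*C) = a3^2 * (A*a3)"
        by (simp add: algebra_simps power2_eq_square)
      also have "\<dots> \<longleftrightarrow> B*C = A*E" using pos_a by (simp add: E_def)
      finally show ?thesis .
    qed
    moreover have "- (a3 * B) < 0 \<longleftrightarrow> B > 0" using pos_a by (simp add: zero_less_mult_iff)
    ultimately show ?thesis unfolding x1 x2 x3 x4 by simp
  qed
  have Qne: "Q s \<noteq> 0" if "Re s = 0" for s
  proof
    assume "Q s = 0"
    hence "Im (Q s) = 0" "Re (Q s) = 0" by simp_all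
    hence "a3 * Im s = 0" "c - a4 * (Im s)^2 = 0" using that by (simp_all add: Q_def power2_eq_square)
    thus False using pos_a c0 by simp
  qed
  have roots: "{s. Re s = 0 \<and> D s = 0} = {w, -w}"
  proof (intro equalityI subsetI)
    fix s assume "s \<in> {s. Re s = 0 \<and> D s = 0}"
    hence "Re s = 0" "D s = 0" by auto
    hence "s - w = 0 \<or> s + w = 0" using fac1[of s] Qne[of s] by auto
    thus "s \<in> {w, -w}" by (auto simp: add_eq_0_iff2)
  next
    fix s assume "s \<in> {w, -w}"
    moreover have "Re w = 0" "D w = 0" "Re (-w) = 0" "D (-w) = 0" using fac1 fac2 by (auto simp: w_def)
    ultimately show "s \<in> {s. Re s = 0 \<and> D s = 0}" by auto
  qed
  have d1: "deriv D w \<noteq> 0" using r1(2) H1w by simp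
  have d2: "deriv D (-w) \<noteq> 0" using r2(2) H2w by simp
  have "-\<i> * complex_of_real p = -w" by (simp add: w_def)
  hence mw: "-\<i> * complex_of_real p = -w" .
  show ?thesis
    unfolding mw w_def[symmetric] cond roots complex_is_Real_iff R1' R2' using p0 pq q_def d1 d2
    apply (simp only: complex.sel I1 I2 Re1 Re2)
    using real_key[OF q0 E0, of B C A] by auto
qed

end
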